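(* Assume $r:\mathbb{R}\to\mathbb{R}$ is an integrable function with $|r(a)|\le r_{\max}$ for all $a$. For every $\alpha>2r_{\max}$, the function $J(\pi_{\mu,\sigma})=\mathbb{E}_{a\sim\mathcal N(\mu,\sigma^2)}\big[r(a)-\alpha\log\mathcal N(a;\mu,\sigma^2)\big]$ of $(\mu,\sigma)\in\mathbb{R}\times(0,\infty)$ has no stationary point.
   Context: $\mathcal N(a;\mu,\sigma^2)$ denotes the Gaussian density with mean $\mu$ and standard deviation $\sigma>0$. This is the single-state (bandit) entropy-regularized objective with action space $\mathbb{R}$ and Gaussian policy $\pi_{\mu,\sigma}=\mathcal N(\mu,\sigma^2)$. *)

theory Defs
  imports "HOL-Probability.Probability"
begin

text \<open>Only meaningful for sigma > 0.\<close>
definition gauss_obj :: "(real \<Rightarrow> real) \<Rightarrow> real \<Rightarrow> real \<times> real \<Rightarrow> real" where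
  "gauss_obj r \<alpha> p = (let \<mu> = fst p; \<sigma> = snd p in
     integral\<^sup>L (density lborel (normal_density \<mu> \<sigma>))
       (\<lambda>a. r a - \<alpha> * ln (normal_density \<mu> \<sigma> a)))"

definition stationary_point :: "(real \<times> real \<Rightarrow> real) \<Rightarrow> real \<times> real \<Rightarrow> bool" where
  "stationary_point J p \<longleftrightarrow> (J has_derivative (\<lambda>h. 0)) (at p)"

end

theory Submission imports Defs begin

lemma ln_nd:
  assumes "\<sigma> > 0"
  shows "ln (normal_density \<mu> \<sigma> a) = - ln (sqrt (2*pi*\<sigma>\<^sup>2)) - (a-\<mu>)\<^sup>2/(2*\<sigma>\<^sup>2)"
  using assms by (simp add: normal_density_def ln_mult ln_div)

lemma intNr_gen:
  fixes r :: "real \<Rightarrow> real"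
  assumes v: "v > 0" and rm: "r \<in> borel_measurable lborel" and rb: "\<And>a. \<bar>r a\<bar> \<le> R"
  shows "integrable lborel (\<lambda>a. normal_density \<mu> v a * r a)"
proof (rule Bochner_Integration.integrable_bound[where f="\<lambda>a. R * normal_density \<mu> v a"])
  show "integrable lborel (\<lambda>a. R * normal_density \<mu> v a)"
    using integrable_normal_moment[OF v, where \<mu>=\<mu> and k=0] by simp
  show "(\<lambda>a. normal_density \<mu> v a * r a) \<in> borel_measurable lborel" using rm by simp
  have R: "R \<ge> 0" using rb[of 0] by simp
  show "AE x in lborel. norm (normal_density \<mu> v x * r x) \<le> norm (R * normal_density \<mu> v x)"
  proof (intro AE_I2)
    fix x
    have "\<bar>normal_density \<mu> v x\<bar> * \<bar>r x\<bar> \<le> \<bar>normal_density \<mu> v x\<bar> * R"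
      by (intro mult_left_mono rb) simp
    then show "norm (normal_density \<mu> v x * r x) \<le> norm (R * normal_density \<mu> v x)"
      using R by (simp add: abs_mult mult.commute)
  qed
qed

lemma J_formula:
  fixes r :: "real \<Rightarrow> real"
  assumes s: "\<sigma> > 0" and rm: "r \<in> borel_measurable lborel" and rb: "\<And>a. \<bar>r a\<bar> \<le> R"
  shows "gauss_obj r \<alpha> (\<mu>,\<sigma>) = (\<integral>a. normal_density \<mu> \<sigma> a * r a \<partial>lborel) + \<alpha> * (ln (sqrt (2*pi*\<sigma>\<^sup>2)) + 1/2)"
proof -
  let ?N = "normal_density \<mu> \<sigma>"
  have intNr: "integrable lborel (\<lambda>a. ?N a * r a)"
    by (rule intNr_gen[OF s rm rb])
  have intN: "integrable lborel ?N"
    using integrable_normal_moment[OF s, where \<mu>=\<mu> and k=0] by simp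
  have intN2: "integrable lborel (\<lambda>a. ?N a * (a-\<mu>)\<^sup>2)"
    using integrable_normal_moment[OF s, where \<mu>=\<mu> and k=2] by simp
  have m2: "(\<integral>a. ?N a * (a-\<mu>)\<^sup>2 \<partial>lborel) = \<sigma>\<^sup>2"
    using integral_normal_moment_even[OF s, where k=1 and \<mu>=\<mu>] by simp
  have "gauss_obj r \<alpha> (\<mu>,\<sigma>) = (\<integral>a. ?N a * (r a - \<alpha> * ln (?N a)) \<partial>lborel)"
    unfolding gauss_obj_def Let_def using rm
    by (simp add: integral_density)
  also have "\<dots> = (\<integral>a. ?N a * r a + (\<alpha> * ln (sqrt (2*pi*\<sigma>\<^sup>2))) * ?N a + (\<alpha>/(2*\<sigma>\<^sup>2)) * (?N a * (a-\<mu>)\<^sup>2) \<partial>lborel)"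
    using s by (intro Bochner_Integration.integral_cong refl) (simp add: ln_nd field_simps)
  also have "\<dots> = (\<integral>a. ?N a * r a \<partial>lborel) + (\<alpha> * ln (sqrt (2*pi*\<sigma>\<^sup>2))) * (\<integral>a. ?N a \<partial>lborel) + (\<alpha>/(2*\<sigma>\<^sup>2)) * (\<integral>a. ?N a * (a-\<mu>)\<^sup>2 \<partial>lborel)"
    using intNr intN intN2 by simp
  also have "\<dots> = (\<integral>a. ?N a * r a \<partial>lborel) + \<alpha> * (ln (sqrt (2*pi*\<sigma>\<^sup>2)) + 1/2)"
    using s by (simp add: m2 field_simps)
  finally show ?thesis .
qed

lemma R_bound:
  fixes r :: "real \<Rightarrow> real"
  assumes s: "0 < \<sigma>" "\<sigma> < t" and rm: "r \<in> borel_measurable lborel" and rb: "\<And>a. \<bar>r a\<bar> \<le> R"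
  shows "(\<integral>a. normal_density \<mu> t a * r a \<partial>lborel) - (\<integral>a. normal_density \<mu> \<sigma> a * r a \<partial>lborel) \<ge> - 2 * R * (1 - \<sigma>/t)"
proof -
  define k where "k = \<sigma>/t"
  have k: "0 < k" "k < 1" using s by (auto simp: k_def)
  have t: "t > 0" using s by simp
  let ?N = "normal_density \<mu> \<sigma>" and ?M = "normal_density \<mu> t"
  have intNr: "integrable lborel (\<lambda>a. normal_density \<mu> v a * r a)" if "v > 0" for v
    by (rule intNr_gen[OF that rm rb])
  have intN: "integrable lborel (normal_density \<mu> v)" if "v > 0" for v
    using integrable_normal_moment[OF that, where \<mu>=\<mu> and k=0] by simp
  have dom: "k * ?N a \<le> ?M a" for a
  proof -
    define E where "E = exp (-(a - \<mu>)\<^sup>2/ (2 * \<sigma>\<^sup>2))"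
    define E' where "E' = exp (-(a - \<mu>)\<^sup>2/ (2 * t\<^sup>2))"
    have EE: "E \<le> E'"
      unfolding E_def E'_def
      using s by (auto intro!: divide_left_mono mult_pos_pos power_strict_mono simp: less_imp_le)
    have kc: "k * (1 / sqrt (2 * pi * \<sigma>\<^sup>2)) = 1 / sqrt (2 * pi * t\<^sup>2)"
      using s by (simp add: k_def real_sqrt_mult field_simps)
    have "k * ?N a = (k * (1 / sqrt (2 * pi * \<sigma>\<^sup>2))) * E"
      unfolding normal_density_def E_def by (simp only: mult.assoc)
    also have "\<dots> = 1 / sqrt (2 * pi * t\<^sup>2) * E" by (simp only: kc)
    also have "\<dots> \<le> 1 / sqrt (2 * pi * t\<^sup>2) * E'"
      by (rule mult_left_mono[OF EE]) simp
    also have "\<dots> = ?M a" unfolding normal_density_def E'_def ..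
    finally show ?thesis .
  qed
  have "(\<integral>a. (?M a - k * ?N a) * r a \<partial>lborel) \<ge> (\<integral>a. - R * (?M a - k * ?N a) \<partial>lborel)"
  proof (rule integral_mono)
    show "integrable lborel (\<lambda>a. (?M a - k * ?N a) * r a)"
      using intNr[OF t] intNr[OF s(1)] by (simp add: left_diff_distrib mult.assoc)
    show "integrable lborel (\<lambda>a. - R * (?M a - k * ?N a))"
      using intN[OF t] intN[OF s(1)] by simp
    fix a
    have "- R \<le> r a" using rb[of a] by simp
    then show "- R * (?M a - k * ?N a) \<le> (?M a - k * ?N a) * r a"
    proof -
      have d: "0 \<le> ?M a - k * ?N a" using dom[of a] by simp
      show ?thesis using mult_right_mono[OF \<open>- R \<le> r a\<close> d] by (simp only: mult.commute)
    qed
  qed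
  also have "(\<integral>a. (?M a - k * ?N a) * r a \<partial>lborel) = (\<integral>a. ?M a * r a \<partial>lborel) - k * (\<integral>a. ?N a * r a \<partial>lborel)"
    using intNr[OF t] intNr[OF s(1)] by (simp add: left_diff_distrib mult.assoc)
  also have "(\<integral>a. - R * (?M a - k * ?N a) \<partial>lborel) = - R * (1 - k)"
    using intN[OF t] intN[OF s(1)] integral_normal_density[OF t] integral_normal_density[OF s(1)] by simp
  finally have 1: "- R * (1 - k) \<le> (\<integral>a. ?M a * r a \<partial>lborel) - k * (\<integral>a. ?N a * r a \<partial>lborel)" .
  have "(\<integral>a. ?N a * r a \<partial>lborel) \<le> (\<integral>a. R * ?N a \<partial>lborel)"
  proof (rule integral_mono)
    show "integrable lborel (\<lambda>a. ?N a * r a)" by (rule intNr[OF s(1)])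
    show "integrable lborel (\<lambda>a. R * ?N a)" using intN[OF s(1)] by simp
    fix a
    show "?N a * r a \<le> R * ?N a"
      using mult_left_mono[OF _ normal_density_nonneg, of "r a" R \<mu> \<sigma> a] rb[of a]
      by (simp add: mult.commute)
  qed
  then have 2: "(\<integral>a. ?N a * r a \<partial>lborel) \<le> R"
    using integral_normal_density[OF s(1)] by simp
  have "(1-k) * (\<integral>a. ?N a * r a \<partial>lborel) \<le> (1-k) * R"
    using 2 k by (intro mult_left_mono) auto
  with 1 show ?thesis unfolding k_def[symmetric] by (simp add: algebra_simps)
qed


theorem proposition3p3:
  fixes r :: "real \<Rightarrow> real" and r_max \<alpha> :: real
  assumes "integrable lborel r"
    and "\<And>a. \<bar>r a\<bar> \<le> r_max"
    and "\<alpha> > 2 * r_max"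
  shows "\<not> (\<exists>\<mu> \<sigma>. \<sigma> > 0 \<and> stationary_point (gauss_obj r \<alpha>) (\<mu>, \<sigma>))"
proof
  assume "\<exists>\<mu> \<sigma>. \<sigma> > 0 \<and> stationary_point (gauss_obj r \<alpha>) (\<mu>, \<sigma>)"
  then obtain \<mu> \<sigma> where s: "\<sigma> > 0" and st: "stationary_point (gauss_obj r \<alpha>) (\<mu>, \<sigma>)" by blast
  have rm: "r \<in> borel_measurable lborel" using assms(1) by auto
  have R0: "r_max \<ge> 0" using assms(2)[of 0] by simp
  have a0: "\<alpha> > 0" using R0 assms(3) by simp
  define g where "g t = gauss_obj r \<alpha> (\<mu>, t)" for t
  have "((\<lambda>t. (\<mu>, t)) has_derivative (\<lambda>h. (0, h))) (at \<sigma>)"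
    by (auto intro!: derivative_eq_intros)
  from has_derivative_compose[OF this st[unfolded stationary_point_def]]
  have "(g has_derivative (\<lambda>h. 0)) (at \<sigma>)" unfolding g_def[abs_def] by simp
  then have "(g has_field_derivative 0) (at \<sigma>)"
  proof -
    have "(\<lambda>h::real. 0::real) = (*) 0" by auto
    with \<open>(g has_derivative (\<lambda>h. 0)) (at \<sigma>)\<close> show ?thesis
      by (simp add: has_field_derivative_def)
  qed
  then have lim: "((\<lambda>h. (g (\<sigma> + h) - g \<sigma>) / h) \<longlongrightarrow> 0) (at 0)"
    by (simp add: DERIV_def)
  define c where "c = (\<alpha> - 2 * r_max) / (\<sigma> + 1)"
  have c: "c > 0" using s assms(3) by (simp add: c_def)
  have "\<forall>\<^sub>F h in at 0. \<bar>(g (\<sigma> + h) - g \<sigma>) / h\<bar> < c"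
    using tendstoD[OF lim c] by (simp add: dist_real_def)
  then have ev1: "\<forall>\<^sub>F h in at_right 0. \<bar>(g (\<sigma> + h) - g \<sigma>) / h\<bar> < c"
    by (rule filter_leD[OF at_le, rotated]) simp
  have ev2: "\<forall>\<^sub>F h in at_right (0::real). 0 < h \<and> h < 1"
    by (simp add: eventually_at_right_field) (auto intro: exI[of _ 1])
  obtain h where h: "0 < h" "h < 1" and q: "\<bar>(g (\<sigma> + h) - g \<sigma>) / h\<bar> < c"
    using eventually_happens[OF eventually_conj[OF ev1 ev2]] by auto
  let ?t = "\<sigma> + h"
  have t: "?t > 0" "\<sigma> < ?t" using s h by auto
  have Rb: "(\<integral>a. normal_density \<mu> ?t a * r a \<partial>lborel) - (\<integral>a. normal_density \<mu> \<sigma> a * r a \<partial>lborel)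
      \<ge> - 2 * r_max * (1 - \<sigma>/?t)"
    by (rule R_bound[OF s t(2) rm assms(2)])
  have lnsq: "ln (sqrt (2*pi*(v)\<^sup>2)) = ln (sqrt (2*pi)) + ln v" if "v > 0" for v
    using that by (simp add: real_sqrt_mult ln_mult)
  have lnb: "ln ?t - ln \<sigma> \<ge> 1 - \<sigma>/?t"
  proof -
    have "ln (\<sigma>/?t) \<le> \<sigma>/?t - 1" by (rule ln_le_minus_one) (use s t in simp)
    then show ?thesis using s t by (simp add: ln_div)
  qed
  have "g ?t - g \<sigma> = ((\<integral>a. normal_density \<mu> ?t a * r a \<partial>lborel) - (\<integral>a. normal_density \<mu> \<sigma> a * r a \<partial>lborel))
      + \<alpha> * (ln ?t - ln \<sigma>)"
    unfolding g_def J_formula[OF t(1) rm assms(2)] J_formula[OF s rm assms(2)] lnsq[OF t(1)] lnsq[OF s]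
    by (simp add: algebra_simps)
  also have "\<dots> \<ge> - 2 * r_max * (1 - \<sigma>/?t) + \<alpha> * (1 - \<sigma>/?t)"
    using Rb mult_left_mono[OF lnb, of \<alpha>] a0 by linarith
  also have "- 2 * r_max * (1 - \<sigma>/?t) + \<alpha> * (1 - \<sigma>/?t) = (\<alpha> - 2 * r_max) * (h / ?t)"
  proof -
    have e: "1 - \<sigma>/?t = h/?t" using t by (simp add: field_simps)
    show ?thesis unfolding e by (simp add: algebra_simps)
  qed
  finally have "g ?t - g \<sigma> \<ge> (\<alpha> - 2 * r_max) * (h / ?t)" .
  moreover have "(\<alpha> - 2 * r_max) * (h / ?t) \<ge> c * h"
  proof -
    have "h / ?t \<ge> h / (\<sigma> + 1)" using h s by (intro divide_left_mono) auto
    then have "(\<alpha> - 2 * r_max) * (h / ?t) \<ge> (\<alpha> - 2 * r_max) * (h / (\<sigma> + 1))"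
      using assms(3) by (intro mult_left_mono) auto
    then show ?thesis by (simp add: c_def)
  qed
  ultimately have "(g ?t - g \<sigma>) / h \<ge> c" using h by (simp add: field_simps)
  moreover have "(g ?t - g \<sigma>) / h \<le> \<bar>(g ?t - g \<sigma>) / h\<bar>" by (rule abs_ge_self)
  ultimately show False using q by linarith
qed

end
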